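(* Assume only upper-bound group constraints, i.e. $\mathcal S=\{r:\ |\{u\in C_k: r(u)\le i\}|\le u_i^k\ \forall i\in[n],k\in[t]\}\neq\emptyset$. Let $F$ be a maxmin-fair distribution over $\mathcal S$ for satisfaction $A=V$. Then $F$ is generalized Lorenz-dominant: for every probability distribution $D$ over $\mathcal S$ and every $m\in[n]$, $$\sum_{j=1}^m D_{(j)}\ \le\ \sum_{j=1}^m F_{(j)},$$ where $D_{(j)}$ denotes the $j$-th smallest value among $(D[u])_{u\in\mathcal U}$.
   Context: Ranking setting: $\mathcal U=\{u_1,\dots,u_n\}$ is a finite set of $n$ individuals, partitioned into groups $C_1,\dots,C_t$. $R:\mathcal U\to\mathbb R$ is a relevance function with pairwise distinct values. A ranking is a bijection $r:\mathcal U\to[n]$. The value function is $V(r,u)=f(r(u))-g(u)$, where $f:[n]\to\mathbb R$ is non-increasing and $g:\mathcal U\to\mathbb R$ satisfies $R(u)\ge R(v)\Rightarrow g(u)\ge g(v)$. The upper bounds $u_i^k$ are integers. Maxmin-fairness: for a finite nonempty set $\mathcal S$ of solutions, a finite set $\mathcal U$ and $A:\mathcal S\times\mathcal U\to\mathbb R$, for a probability distribution $D$ over $\mathcal S$ write $D[u]=\mathbb E_{S\sim D}[A(S,u)]$. A distribution $F$ over $\mathcal S$ is maxmin-fair if for every distribution $D$ over $\mathcal S$ and every $u\in\mathcal U$: if $D[u]>F[u]$ then there exists $v\in\mathcal U$ with $D[v]<F[v]\le F[u]$. *)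

theory Defs
  imports "HOL-Probability.Probability_Mass_Function"
begin

definition dist_val :: "('s \<Rightarrow> 'u \<Rightarrow> real) \<Rightarrow> 's pmf \<Rightarrow> 'u \<Rightarrow> real" where
  "dist_val A D u = measure_pmf.expectation D (\<lambda>s. A s u)"

definition maxmin_fair :: "'s set \<Rightarrow> 'u set \<Rightarrow> ('s \<Rightarrow> 'u \<Rightarrow> real) \<Rightarrow> 's pmf \<Rightarrow> bool" where
  "maxmin_fair SS UU A F \<longleftrightarrow> set_pmf F \<subseteq> SS \<and>
     (\<forall>D. set_pmf D \<subseteq> SS \<longrightarrow> (\<forall>u\<in>UU. dist_val A D u > dist_val A F u \<longrightarrow>
        (\<exists>v\<in>UU. dist_val A D v < dist_val A F v \<and> dist_val A F v \<le> dist_val A F u)))"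

(* the values (x u)_{u in UU} sorted increasingly (with multiplicity); entry j-1 is x_(j) *)
definition sorted_vals :: "'u set \<Rightarrow> ('u \<Rightarrow> real) \<Rightarrow> real list" where
  "sorted_vals UU x = sorted_list_of_multiset (image_mset x (mset_set UU))"

definition lorenz_sum :: "'u set \<Rightarrow> ('u \<Rightarrow> real) \<Rightarrow> nat \<Rightarrow> real" where
  "lorenz_sum UU x m = sum_list (take m (sorted_vals UU x))"

definition rankings :: "('a::finite \<Rightarrow> nat) set" where
  "rankings = {r. bij_betw r UNIV {1..CARD('a)}}"

definition feasible_rankings :: "nat \<Rightarrow> (nat \<Rightarrow> 'a::finite set) \<Rightarrow> (nat \<Rightarrow> nat \<Rightarrow> int) \<Rightarrow> ('a \<Rightarrow> nat) set" where
  "feasible_rankings t C ub = {r \<in> rankings.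
     \<forall>i\<in>{1..CARD('a)}. \<forall>k\<in>{1..t}. int (card {u \<in> C k. r u \<le> i}) \<le> ub i k}"

end

theory Submission
  imports Defs
begin


lemma assign_aux:
  fixes w :: "'a \<Rightarrow> nat" and ga :: "'a \<Rightarrow> nat" and L :: "nat \<Rightarrow> nat"
  assumes "finite A"
  shows "\<forall>B. finite B \<longrightarrow> (\<forall>k y. card {a\<in>A. ga a = k \<and> w a \<le> y} \<le> card {b\<in>B. L b = k \<and> b \<le> y})
     \<longrightarrow> (\<exists>\<phi>. inj_on \<phi> A \<and> \<phi> ` A \<subseteq> B \<and> (\<forall>a\<in>A. L (\<phi> a) = ga a \<and> \<phi> a \<le> w a))"
  using assms
proof (induction A rule: finite_ranking_induct[where f = w])
  case empty
  then show ?case by auto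
next
  case (insert a0 S)
  show ?case
  proof (cases "a0 \<in> S")
    case True
    then show ?thesis using insert.IH by (simp add: insert_absorb)
  next
    case a0S: False
    show ?thesis
    proof (intro allI impI)
      fix B :: "nat set"
      assume fB: "finite B"
        and C: "\<forall>k y. card {a\<in>insert a0 S. ga a = k \<and> w a \<le> y} \<le> card {b\<in>B. L b = k \<and> b \<le> y}"
      define k0 where "k0 = ga a0"
      define Bc where "Bc = {b\<in>B. L b = k0 \<and> b \<le> w a0}"
      have fS: "finite S" by fact
      have fBc: "finite Bc" using fB unfolding Bc_def by simp
      have a0in: "a0 \<in> {a\<in>insert a0 S. ga a = k0 \<and> w a \<le> w a0}" unfolding k0_def by simp
      have "card {a\<in>insert a0 S. ga a = k0 \<and> w a \<le> w a0} > 0"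
        using a0in fS by (subst card_gt_0_iff) auto
      moreover have "card {a\<in>insert a0 S. ga a = k0 \<and> w a \<le> w a0} \<le> card Bc" using C unfolding Bc_def by blast
      ultimately have "card Bc > 0" by linarith
      then have Bcne: "Bc \<noteq> {}" by auto
      define b0 where "b0 = Max Bc"
      have b0: "b0 \<in> Bc" "\<forall>b\<in>Bc. b \<le> b0" using Max_in[OF fBc Bcne] Max_ge[OF fBc] unfolding b0_def by auto
      have b0B: "b0 \<in> B" "L b0 = k0" "b0 \<le> w a0" using b0 unfolding Bc_def by auto
      define B' where "B' = B - {b0}"
      have C': "card {a\<in>S. ga a = k \<and> w a \<le> y} \<le> card {b\<in>B'. L b = k \<and> b \<le> y}" for k y
      proof -
        have eqB: "{b\<in>B'. L b = k \<and> b \<le> y} = {b\<in>B. L b = k \<and> b \<le> y} - {b0}" unfolding B'_def by auto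
        have fBB: "finite {b\<in>B. L b = k \<and> b \<le> y}" using fB by simp
        have fSA: "finite {a\<in>S. ga a = k \<and> w a \<le> y}" using fS by simp
        show ?thesis
        proof (cases "b0 \<in> {b\<in>B. L b = k \<and> b \<le> y}")
          case False
          then have e: "{b\<in>B'. L b = k \<and> b \<le> y} = {b\<in>B. L b = k \<and> b \<le> y}" using eqB by auto
          have "card {a\<in>S. ga a = k \<and> w a \<le> y} \<le> card {a\<in>insert a0 S. ga a = k \<and> w a \<le> y}"
            using fS by (intro card_mono) auto
          moreover have "card {a\<in>insert a0 S. ga a = k \<and> w a \<le> y} \<le> card {b\<in>B. L b = k \<and> b \<le> y}" using C by blast
          ultimately have "card {a\<in>S. ga a = k \<and> w a \<le> y} \<le> card {b\<in>B. L b = k \<and> b \<le> y}" by linarith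
          then show ?thesis using e by simp
        next
          case True
          then have kk: "k = k0" "b0 \<le> y" using b0B by auto
          have cB: "card {b\<in>B'. L b = k \<and> b \<le> y} = card {b\<in>B. L b = k \<and> b \<le> y} - 1"
            using eqB True fBB by simp
          show ?thesis
          proof (cases "w a0 \<le> y")
            case True
            have "{a\<in>insert a0 S. ga a = k \<and> w a \<le> y} = insert a0 {a\<in>S. ga a = k \<and> w a \<le> y}"
              using True kk k0_def by auto
            then have "card {a\<in>insert a0 S. ga a = k \<and> w a \<le> y} = card {a\<in>S. ga a = k \<and> w a \<le> y} + 1"
              using fSA a0S by simp
            moreover have "card {a\<in>insert a0 S. ga a = k \<and> w a \<le> y} \<le> card {b\<in>B. L b = k \<and> b \<le> y}" using C by blast
            ultimately show ?thesis using cB by linarith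
          next
            case False
            have eBc: "{b\<in>B. L b = k \<and> b \<le> y} = Bc"
            proof
              show "{b\<in>B. L b = k \<and> b \<le> y} \<subseteq> Bc" using False kk unfolding Bc_def by auto
              show "Bc \<subseteq> {b\<in>B. L b = k \<and> b \<le> y}"
              proof
                fix b assume b: "b \<in> Bc"
                then have "b \<le> y" using b0(2) kk(2) by fastforce
                then show "b \<in> {b\<in>B. L b = k \<and> b \<le> y}" using b kk unfolding Bc_def by auto
              qed
            qed
            have sub: "insert a0 {a\<in>S. ga a = k \<and> w a \<le> y} \<subseteq> {a\<in>insert a0 S. ga a = k0 \<and> w a \<le> w a0}"
              using False kk k0_def by auto
            have "card (insert a0 {a\<in>S. ga a = k \<and> w a \<le> y}) \<le> card {a\<in>insert a0 S. ga a = k0 \<and> w a \<le> w a0}"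
              using fS by (intro card_mono[OF _ sub]) auto
            moreover have "card (insert a0 {a\<in>S. ga a = k \<and> w a \<le> y}) = card {a\<in>S. ga a = k \<and> w a \<le> y} + 1"
              using fSA a0S by simp
            moreover have "card {a\<in>insert a0 S. ga a = k0 \<and> w a \<le> w a0} \<le> card Bc" using C unfolding Bc_def by blast
            ultimately have "card {a\<in>S. ga a = k \<and> w a \<le> y} + 1 \<le> card Bc" by linarith
            then show ?thesis using cB eBc by simp
          qed
        qed
      qed
      have fB': "finite B'" using fB unfolding B'_def by simp
      obtain \<phi> where phi: "inj_on \<phi> S" "\<phi> ` S \<subseteq> B'" "\<forall>a\<in>S. L (\<phi> a) = ga a \<and> \<phi> a \<le> w a"
        using insert.IH[rule_format, OF fB' C'] by blast
      define \<psi> where "\<psi> = \<phi>(a0 := b0)"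
      have psiS: "\<forall>a\<in>S. \<psi> a = \<phi> a" using a0S unfolding \<psi>_def by auto
      have "inj_on \<psi> S" using phi(1) psiS by (simp add: inj_on_def)
      moreover have "\<psi> a0 \<notin> \<psi> ` (S - {a0})" using phi(2) psiS unfolding \<psi>_def B'_def by auto
      ultimately have "inj_on \<psi> (insert a0 S)" by simp
      moreover have "\<psi> ` insert a0 S \<subseteq> B" using phi(2) psiS b0B unfolding B'_def \<psi>_def by auto
      moreover have "\<forall>a\<in>insert a0 S. L (\<psi> a) = ga a \<and> \<psi> a \<le> w a"
        using phi(3) psiS b0B k0_def unfolding \<psi>_def by auto
      ultimately show "\<exists>\<phi>. inj_on \<phi> (insert a0 S) \<and> \<phi> ` insert a0 S \<subseteq> B \<and> (\<forall>a\<in>insert a0 S. L (\<phi> a) = ga a \<and> \<phi> a \<le> w a)"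
        by blast
    qed
  qed
qed



definition cnt :: "(nat \<Rightarrow> nat) \<Rightarrow> nat \<Rightarrow> nat \<Rightarrow> nat" where
  "cnt L k y = (\<Sum>x=1..y. if L x = k then 1 else 0)"

lemma cnt_0[simp]: "cnt L k 0 = 0" by (simp add: cnt_def)
lemma cnt_Suc: "cnt L k (Suc y) = cnt L k y + (if L (Suc y) = k then 1 else 0)"
  by (simp add: cnt_def)
lemma cnt_mono: "y \<le> y' \<Longrightarrow> cnt L k y \<le> cnt L k y'"
  unfolding cnt_def by (rule sum_mono2) auto
lemma cnt_le: "cnt L k y \<le> y"
proof -
  have "cnt L k y \<le> (\<Sum>x=1..y. 1::nat)" unfolding cnt_def by (rule sum_mono) auto
  thus ?thesis by simp
qed
lemma cnt_upd_less: "y < z \<Longrightarrow> cnt (L(z:=a)) k y = cnt L k y"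
  unfolding cnt_def by (rule sum.cong) auto
lemma cnt_upd_ge: assumes "1 \<le> z" "z \<le> y"
  shows "cnt (L(z:=a)) k y + (if L z = k then 1 else 0) = cnt L k y + (if a = k then 1 else 0)"
proof -
  have z: "z \<in> {1..y}" using assms by auto
  have e: "\<And>M. cnt M k y = (if M z = k then 1 else 0) + (\<Sum>x\<in>{1..y}-{z}. if M x = k then 1 else 0)"
    unfolding cnt_def using z by (simp add: sum.remove)
  have "(\<Sum>x\<in>{1..y}-{z}. if (L(z:=a)) x = k then 1 else 0) = (\<Sum>x\<in>{1..y}-{z}. if L x = k then 1 else 0)"
    by (rule sum.cong) auto
  then show ?thesis using e[of "L(z:=a)"] e[of L] by simp
qed

definition cT :: "nat \<Rightarrow> (nat \<Rightarrow> nat) \<Rightarrow> (nat \<Rightarrow> nat) \<Rightarrow> nat \<Rightarrow> nat" where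
  "cT t tau L y = (\<Sum>k=1..t. min (cnt L k y) (tau k))"

definition feasL :: "nat \<Rightarrow> nat \<Rightarrow> (nat \<Rightarrow> nat \<Rightarrow> int) \<Rightarrow> (nat \<Rightarrow> nat) \<Rightarrow> (nat \<Rightarrow> nat) \<Rightarrow> bool" where
  "feasL n t ub cap L \<longleftrightarrow> (\<forall>x\<in>{1..n}. L x \<in> {1..t}) \<and>
     (\<forall>y\<in>{1..n}. \<forall>k\<in>{1..t}. int (cnt L k y) \<le> ub y k) \<and> (\<forall>k\<in>{1..t}. cnt L k n = cap k)"

definition Tslot :: "(nat \<Rightarrow> nat) \<Rightarrow> (nat \<Rightarrow> nat) \<Rightarrow> nat \<Rightarrow> bool" where
  "Tslot tau L z \<longleftrightarrow> cnt L (L z) z \<le> tau (L z)"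

definition avail :: "nat \<Rightarrow> (nat \<Rightarrow> nat \<Rightarrow> int) \<Rightarrow> (nat \<Rightarrow> nat) \<Rightarrow> (nat \<Rightarrow> nat) \<Rightarrow> nat \<Rightarrow> nat \<Rightarrow> bool" where
  "avail n ub tau L z k \<longleftrightarrow> cnt L k (z-1) < tau k \<and> (\<forall>y\<in>{z..n}. int (cnt L k (z-1)) + 1 \<le> ub y k)"

definition domL :: "nat \<Rightarrow> (nat \<Rightarrow> nat) \<Rightarrow> (nat \<Rightarrow> nat) \<Rightarrow> (nat \<Rightarrow> nat) \<Rightarrow> bool" where
  "domL t tau L' L \<longleftrightarrow> (\<forall>k\<in>{1..t}. \<forall>y. min (cnt L k y) (tau k) \<le> min (cnt L' k y) (tau k))"

lemma cT_0[simp]: "cT t tau L 0 = 0" by (simp add: cT_def)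

lemma cT_Suc:
  assumes "L (Suc y) \<in> {1..t}"
  shows "cT t tau L (Suc y) = cT t tau L y + (if Tslot tau L (Suc y) then 1 else 0)"
proof -
  let ?l = "L (Suc y)"
  have l: "?l \<in> {1..t}" using assms .
  have e: "\<And>y. cT t tau L y = min (cnt L ?l y) (tau ?l) + (\<Sum>k\<in>{1..t}-{?l}. min (cnt L k y) (tau k))"
    unfolding cT_def using l by (simp add: sum.remove)
  have o: "(\<Sum>k\<in>{1..t}-{?l}. min (cnt L k (Suc y)) (tau k)) = (\<Sum>k\<in>{1..t}-{?l}. min (cnt L k y) (tau k))"
    by (rule sum.cong) (auto simp: cnt_Suc)
  have "min (cnt L ?l (Suc y)) (tau ?l) = min (cnt L ?l y) (tau ?l) + (if Tslot tau L (Suc y) then 1 else 0)"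
    unfolding Tslot_def by (simp add: cnt_Suc)
  then show ?thesis using e[of y] e[of "Suc y"] o by simp
qed

lemma cT_Suc_le:
  assumes "L (Suc y) \<in> {1..t}"
  shows "cT t tau L (Suc y) \<le> cT t tau L y + 1"
  using cT_Suc[where L=L and y=y and t=t and tau=tau] assms by simp

lemma non_idle:
  assumes fL: "feasL n t ub cap L" and fR: "feasL n t ub cap R" and i: "i \<le> n"
    and H: "\<forall>z\<in>{1..i}. \<not> Tslot tau L z \<longrightarrow> (\<forall>k\<in>{1..t}. \<not> avail n ub tau L z k)"
  shows "cT t tau R i \<le> cT t tau L i"
  using i H
proof (induction i)
  case 0
  then show ?case by simp
next
  case (Suc i)
  have Lin: "L (Suc i) \<in> {1..t}" "R (Suc i) \<in> {1..t}" using fL fR Suc.prems(1) unfolding feasL_def by auto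
  show ?case
  proof (cases "Tslot tau L (Suc i)")
    case True
    have "cT t tau R i \<le> cT t tau L i" using Suc by auto
    then show ?thesis using cT_Suc[where L=L and y=i and t=t and tau=tau] cT_Suc_le[where L=R and y=i and t=t and tau=tau] Lin True by simp
  next
    case False
    have na: "\<forall>k\<in>{1..t}. \<not> avail n ub tau L (Suc i) k" using Suc.prems False by auto
    have "min (cnt R k (Suc i)) (tau k) \<le> min (cnt L k i) (tau k)" if k: "k \<in> {1..t}" for k
    proof (cases "cnt L k i < tau k")
      case True
      with na k obtain y where y: "y \<in> {Suc i..n}" "ub y k < int (cnt L k i) + 1"
        unfolding avail_def by fastforce
      have "int (cnt R k y) \<le> ub y k" using fR y(1) k unfolding feasL_def by auto
      moreover have "cnt R k (Suc i) \<le> cnt R k y" using y(1) by (intro cnt_mono) auto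
      ultimately have "cnt R k (Suc i) \<le> cnt L k i" using y(2) by linarith
      then show ?thesis by simp
    next
      case False
      then show ?thesis by simp
    qed
    then have "cT t tau R (Suc i) \<le> cT t tau L i" unfolding cT_def by (intro sum_mono) auto
    then show ?thesis using cT_Suc[where L=L and y=i and t=t and tau=tau] Lin False by simp
  qed
qed

lemma cnt_const: "a \<le> b \<Longrightarrow> (\<forall>x\<in>{a<..b}. L x \<noteq> k) \<Longrightarrow> cnt L k b = cnt L k a"
proof (induction b)
  case 0
  then show ?case by simp
next
  case (Suc b)
  show ?case
  proof (cases "a = Suc b")
    case True then show ?thesis by simp
  next
    case False
    then have "a \<le> b" using Suc.prems by simp
    then show ?thesis using Suc by (auto simp: cnt_Suc)
  qed
qed

lemma cnt_swap:
  assumes "1 \<le> z" "z < p" "L p = k" "L z = l"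
  shows "cnt (L(z:=k, p:=l)) k' y + (if z \<le> y \<and> y < p \<and> k' = l then 1 else 0)
       = cnt L k' y + (if z \<le> y \<and> y < p \<and> k' = k then 1 else 0)"
proof -
  consider "y < z" | "z \<le> y" "y < p" | "p \<le> y" by linarith
  then show ?thesis
  proof cases
    case 1
    then show ?thesis using assms by (simp add: cnt_upd_less)
  next
    case 2
    have a: "cnt (L(z:=k, p:=l)) k' y = cnt (L(z:=k)) k' y" using 2 by (simp add: cnt_upd_less)
    have b: "cnt (L(z:=k)) k' y + (if L z = k' then 1 else 0) = cnt L k' y + (if k = k' then 1 else 0)"
      using cnt_upd_ge[of z y L k k'] 2 assms by simp
    show ?thesis using a b 2 assms by auto
  next
    case 3
    have a: "cnt (L(z:=k, p:=l)) k' y + (if (L(z:=k)) p = k' then 1 else 0) = cnt (L(z:=k)) k' y + (if l = k' then 1 else 0)"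
      using cnt_upd_ge[of p y "L(z:=k)" l k'] 3 assms by simp
    have b: "cnt (L(z:=k)) k' y + (if L z = k' then 1 else 0) = cnt L k' y + (if k = k' then 1 else 0)"
      using cnt_upd_ge[of z y L k k'] 3 assms by simp
    show ?thesis using a b 3 assms by (auto split: if_splits)
  qed
qed

lemma domL_cT: "domL t tau L' L \<Longrightarrow> cT t tau L y \<le> cT t tau L' y"
  unfolding domL_def cT_def by (intro sum_mono) auto

lemma domL_refl: "domL t tau L L" by (simp add: domL_def)
lemma domL_trans: "domL t tau L2 L1 \<Longrightarrow> domL t tau L3 L2 \<Longrightarrow> domL t tau L3 L1"
  unfolding domL_def by (meson order_trans)

lemma swap_step:
  assumes fL: "feasL n t ub cap L" and tau_le: "\<forall>k\<in>{1..t}. tau k \<le> cap k"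
    and z: "z \<in> {1..n}" and nT: "\<not> Tslot tau L z" and k: "k \<in> {1..t}" and av: "avail n ub tau L z k"
  shows "\<exists>L'. feasL n t ub cap L' \<and> domL t tau L' L \<and> cT t tau L z < cT t tau L' z"
proof -
  define l where "l = L z"
  have l: "l \<in> {1..t}" using fL z unfolding feasL_def l_def by auto
  have zS: "z = Suc (z - 1)" using z by auto
  have av1: "cnt L k (z-1) < tau k" using av unfolding avail_def by auto
  have tk: "tau k \<le> cap k" using tau_le k by auto
  have lk: "l \<noteq> k"
  proof
    assume "l = k"
    then have "cnt L (L z) z = cnt L k (z-1) + 1" using cnt_Suc[of L k "z-1"] zS l_def by simp
    then show False using nT av1 \<open>l = k\<close> l_def unfolding Tslot_def by simp
  qed
  have ckz: "cnt L k z = cnt L k (z-1)" using cnt_Suc[of L k "z-1"] zS lk l_def by simp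
  have "\<exists>y. z < y \<and> L y = k"
  proof (rule ccontr)
    assume "\<not> ?thesis"
    then have "cnt L k n = cnt L k z" using z by (intro cnt_const) auto
    moreover have "cnt L k n = cap k" using fL k unfolding feasL_def by auto
    ultimately show False using tk av1 ckz by auto
  qed
  define p where "p = (LEAST y. z < y \<and> L y = k)"
  have p: "z < p" "L p = k" using LeastI_ex[OF \<open>\<exists>y. z < y \<and> L y = k\<close>] unfolding p_def by auto
  have pmin: "\<forall>x\<in>{z<..<p}. L x \<noteq> k" using not_less_Least p_def by fastforce
  have pn: "p \<le> n"
  proof (rule ccontr)
    assume "\<not> p \<le> n"
    then have "cnt L k n = cnt L k z" using z pmin by (intro cnt_const) auto
    moreover have "cnt L k n = cap k" using fL k unfolding feasL_def by auto
    ultimately show False using tk av1 ckz by auto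
  qed
  define L' where "L' = L(z:=k, p:=l)"
  have cs: "\<And>k' y. cnt L' k' y + (if z \<le> y \<and> y < p \<and> k' = l then 1 else 0)
       = cnt L k' y + (if z \<le> y \<and> y < p \<and> k' = k then 1 else 0)"
    unfolding L'_def using cnt_swap[of z p L k l] z p l_def by auto
  have ck_mid: "cnt L k y = cnt L k (z-1)" if "z \<le> y" "y < p" for y
  proof -
    have "cnt L k y = cnt L k z" using that pmin by (intro cnt_const) auto
    then show ?thesis using ckz by simp
  qed
  have cl_big: "cnt L l y > tau l" if "z \<le> y" for y
  proof -
    have "cnt L l z > tau l" using nT unfolding Tslot_def l_def by simp
    moreover have "cnt L l z \<le> cnt L l y" using that by (rule cnt_mono)
    ultimately show ?thesis by simp
  qed
  have feas': "feasL n t ub cap L'"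
    unfolding feasL_def
  proof (intro conjI ballI)
    fix x assume "x \<in> {1..n}"
    then show "L' x \<in> {1..t}" using fL k l unfolding feasL_def L'_def by auto
  next
    fix y k' assume y: "y \<in> {1..n}" and k': "k' \<in> {1..t}"
    have old: "int (cnt L k' y) \<le> ub y k'" using fL y k' unfolding feasL_def by auto
    show "int (cnt L' k' y) \<le> ub y k'"
    proof (cases "z \<le> y \<and> y < p \<and> k' = k")
      case True
      then have "cnt L' k' y = cnt L k (z-1) + 1" using cs[of k' y] ck_mid[of y] lk by auto
      moreover have "int (cnt L k (z-1)) + 1 \<le> ub y k" using av y True unfolding avail_def by auto
      ultimately show ?thesis using True by simp
    next
      case False
      then have "cnt L' k' y \<le> cnt L k' y" using cs[of k' y] by (auto split: if_splits)
      then show ?thesis using old by linarith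
    qed
  next
    fix k' assume k': "k' \<in> {1..t}"
    have "cnt L' k' n = cnt L k' n" using cs[of k' n] pn by auto
    then show "cnt L' k' n = cap k'" using fL k' unfolding feasL_def by auto
  qed
  have dom': "domL t tau L' L"
    unfolding domL_def
  proof (intro ballI allI)
    fix k' y assume k': "k' \<in> {1..t}"
    show "min (cnt L k' y) (tau k') \<le> min (cnt L' k' y) (tau k')"
    proof (cases "z \<le> y \<and> y < p \<and> k' = l")
      case True
      then have "cnt L' k' y + 1 = cnt L k' y" using cs[of k' y] lk by auto
      moreover have "cnt L k' y > tau k'" using cl_big[of y] True by auto
      ultimately show ?thesis by simp
    next
      case False
      then have "cnt L k' y \<le> cnt L' k' y" using cs[of k' y] by (auto split: if_splits)
      then show ?thesis by simp
    qed
  qed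
  have strict: "cT t tau L z < cT t tau L' z"
    unfolding cT_def
  proof (rule sum_strict_mono_ex1)
    show "finite {1..t}" by simp
    show "\<forall>x\<in>{1..t}. min (cnt L x z) (tau x) \<le> min (cnt L' x z) (tau x)"
      using dom' unfolding domL_def by auto
    have "cnt L' k z = cnt L k (z-1) + 1" using cs[of k z] ckz lk p by auto
    then have "min (cnt L k z) (tau k) < min (cnt L' k z) (tau k)" using ckz av1 by simp
    then show "\<exists>a\<in>{1..t}. min (cnt L a z) (tau a) < min (cnt L' a z) (tau a)" using k by blast
  qed
  show ?thesis using feas' dom' strict by blast
qed

lemma cT_le_tau: "cT t tau L y \<le> (\<Sum>k=1..t. tau k)"
  unfolding cT_def by (intro sum_mono) auto

lemma improve:
  assumes fR: "feasL n t ub cap R" and tau_le: "\<forall>k\<in>{1..t}. tau k \<le> cap k" and i: "i \<le> n"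
  shows "feasL n t ub cap L \<Longrightarrow> \<exists>L'. feasL n t ub cap L' \<and> domL t tau L' L \<and> cT t tau R i \<le> cT t tau L' i"
proof (induction "n * (\<Sum>k=1..t. tau k) - (\<Sum>y=1..n. cT t tau L y)" arbitrary: L rule: less_induct)
  case less
  show ?case
  proof (cases "\<forall>z\<in>{1..i}. \<not> Tslot tau L z \<longrightarrow> (\<forall>k\<in>{1..t}. \<not> avail n ub tau L z k)")
    case True
    then show ?thesis using non_idle[OF less.prems fR i True] domL_refl less.prems by blast
  next
    case False
    then obtain z k where z: "z \<in> {1..i}" "\<not> Tslot tau L z" and k: "k \<in> {1..t}" "avail n ub tau L z k" by blast
    have zn: "z \<in> {1..n}" using z i by auto
    obtain L1 where L1: "feasL n t ub cap L1" "domL t tau L1 L" "cT t tau L z < cT t tau L1 z"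
      using swap_step[OF less.prems tau_le zn z(2) k] by blast
    have Mlt: "(\<Sum>y=1..n. cT t tau L y) < (\<Sum>y=1..n. cT t tau L1 y)"
      using L1 zn by (intro sum_strict_mono_ex1) (auto intro: domL_cT)
    have "(\<Sum>y=1..n. cT t tau L1 y) \<le> (\<Sum>y=1..n. (\<Sum>k=1..t. tau k))"
      by (intro sum_mono cT_le_tau)
    then have "(\<Sum>y=1..n. cT t tau L1 y) \<le> n * (\<Sum>k=1..t. tau k)" by simp
    then have "n * (\<Sum>k=1..t. tau k) - (\<Sum>y=1..n. cT t tau L1 y) < n * (\<Sum>k=1..t. tau k) - (\<Sum>y=1..n. cT t tau L y)"
      using Mlt by linarith
    from less.hyps[OF this L1(1)] obtain L' where "feasL n t ub cap L'" "domL t tau L' L1" "cT t tau R i \<le> cT t tau L' i" by blast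
    then show ?thesis using L1(2) domL_trans by blast
  qed
qed



lemma take_sorted_le:
  fixes xs :: "real list"
  shows "sorted xs \<Longrightarrow> N \<subseteq># mset xs \<Longrightarrow> size N = m \<Longrightarrow> sum_list (take m xs) \<le> sum_mset N"
proof (induction xs arbitrary: N m)
  case Nil
  then show ?case by simp
next
  case (Cons a ys)
  have sys: "sorted ys" and amin: "\<forall>y\<in>set ys. a \<le> y" using Cons.prems(1) by auto
  show ?case
  proof (cases m)
    case 0
    then show ?thesis using Cons.prems by simp
  next
    case (Suc m')
    show ?thesis
    proof (cases "a \<in># N")
      case True
      have sub: "N - {#a#} \<subseteq># mset ys"
        using Cons.prems(2) unfolding subseteq_mset_def by (auto simp: count_add_mset split: if_splits)
      have sz: "size (N - {#a#}) = m'" using Cons.prems(3) True Suc by (simp add: size_Diff_singleton)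
      have "sum_list (take m' ys) \<le> sum_mset (N - {#a#})" using Cons.IH[OF sys sub sz] .
      moreover have "sum_mset N = a + sum_mset (N - {#a#})" using True by (simp add: sum_mset.remove)
      ultimately show ?thesis using Suc by simp
    next
      case False
      have H: "\<forall>b. count N b \<le> count (add_mset a (mset ys)) b"
        using Cons.prems(2) unfolding subseteq_mset_def by simp
      have sub: "N \<subseteq># mset ys"
        unfolding subseteq_mset_def
      proof
        fix b
        have "count N b \<le> count (add_mset a (mset ys)) b" using H by blast
        then show "count N b \<le> count (mset ys) b" using False
          by (cases "b = a") (auto simp: not_in_iff)
      qed
      have "N \<noteq> {#}" using Cons.prems(3) Suc by auto
      then obtain b where b: "b \<in># N" by blast
      have bys: "b \<in> set ys" using sub b by (metis mset_subset_eqD set_mset_mset)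
      have sub2: "N - {#b#} \<subseteq># mset ys" using sub by (meson diff_subset_eq_self subset_mset.order_trans)
      have sz: "size (N - {#b#}) = m'" using Cons.prems(3) b Suc by (simp add: size_Diff_singleton)
      have "sum_list (take m' ys) \<le> sum_mset (N - {#b#})" using Cons.IH[OF sys sub2 sz] .
      moreover have "sum_mset N = b + sum_mset (N - {#b#})" using b by (simp add: sum_mset.remove)
      moreover have "a \<le> b" using amin bys by auto
      ultimately show ?thesis using Suc by simp
    qed
  qed
qed

lemma sub_image_mset:
  assumes "finite A"
  shows "N \<subseteq># image_mset x (mset_set A) \<Longrightarrow> \<exists>S\<subseteq>A. image_mset x (mset_set S) = N"
  using assms
proof (induction A arbitrary: N rule: finite_induct)
  case empty
  then show ?case by simp
next
  case (insert a A)
  have im: "image_mset x (mset_set (insert a A)) = add_mset (x a) (image_mset x (mset_set A))"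
    using insert.hyps by simp
  show ?case
  proof (cases "x a \<in># N")
    case True
    have H: "\<forall>b. count N b \<le> count (add_mset (x a) (image_mset x (mset_set A))) b"
      using insert.prems im unfolding subseteq_mset_def by simp
    have "N - {#x a#} \<subseteq># image_mset x (mset_set A)"
      unfolding subseteq_mset_def
    proof
      fix b
      have "count N b \<le> count (add_mset (x a) (image_mset x (mset_set A))) b" using H by blast
      then show "count (N - {#x a#}) b \<le> count (image_mset x (mset_set A)) b" by (cases "b = x a") auto
    qed
    then obtain S where S: "S \<subseteq> A" "image_mset x (mset_set S) = N - {#x a#}" using insert.IH by blast
    have "finite S" using S(1) insert.hyps(1) finite_subset by blast
    moreover have "a \<notin> S" using S(1) insert.hyps(2) by auto
    ultimately have "image_mset x (mset_set (insert a S)) = add_mset (x a) (N - {#x a#})" using S by simp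
    also have "\<dots> = N" using True by simp
    finally show ?thesis using S(1) by blast
  next
    case False
    have H: "\<forall>b. count N b \<le> count (add_mset (x a) (image_mset x (mset_set A))) b"
      using insert.prems im unfolding subseteq_mset_def by simp
    have "N \<subseteq># image_mset x (mset_set A)"
      unfolding subseteq_mset_def
    proof
      fix b
      have "count N b \<le> count (add_mset (x a) (image_mset x (mset_set A))) b" using H by blast
      then show "count N b \<le> count (image_mset x (mset_set A)) b" using False
        by (cases "b = x a") (auto simp: not_in_iff)
    qed
    then obtain S where "S \<subseteq> A" "image_mset x (mset_set S) = N" using insert.IH by blast
    then show ?thesis by blast
  qed
qed

lemma lorenz_le:
  fixes x :: "'a::finite \<Rightarrow> real"
  assumes "card S = m"
  shows "lorenz_sum UNIV x m \<le> sum x S"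
proof -
  have "image_mset x (mset_set S) \<subseteq># image_mset x (mset_set UNIV)"
    by (intro image_mset_subseteq_mono) (simp add: subset_imp_msubset_mset_set)
  moreover have "size (image_mset x (mset_set S)) = m" using assms by simp
  ultimately have "sum_list (take m (sorted_vals UNIV x)) \<le> sum_mset (image_mset x (mset_set S))"
    unfolding sorted_vals_def by (intro take_sorted_le) auto
  then show ?thesis unfolding lorenz_sum_def by (simp add: sum_unfold_sum_mset)
qed

lemma lorenz_eq:
  fixes x :: "'a::finite \<Rightarrow> real"
  assumes "m \<le> CARD('a)"
  shows "\<exists>S. card S = m \<and> lorenz_sum UNIV x m = sum x S"
proof -
  define xs where "xs = sorted_vals UNIV x"
  have mx: "mset xs = image_mset x (mset_set UNIV)" unfolding xs_def sorted_vals_def by simp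
  have "mset (take m xs) \<subseteq># mset xs"
    by (metis append_take_drop_id mset_append mset_subset_eq_add_left)
  then obtain S where S: "image_mset x (mset_set S) = mset (take m xs)"
    using sub_image_mset[of UNIV "mset (take m xs)" x] mx by auto
  have "length xs = CARD('a)" using mx by (metis size_image_mset size_mset size_mset_set)
  then have "size (mset (take m xs)) = m" using assms by simp
  then have "card S = m" using S by (metis size_image_mset size_mset_set)
  moreover have "lorenz_sum UNIV x m = sum x S"
    unfolding lorenz_sum_def xs_def[symmetric] by (metis S sum_mset_sum_list sum_unfold_sum_mset)
  ultimately show ?thesis by blast
qed



lemma avg_subset:
  fixes h :: "'b \<Rightarrow> real"
  assumes "finite A"
  shows "\<forall>k\<le>card A. \<exists>W\<subseteq>A. card W = k \<and> real (card A) * sum h W \<le> real k * sum h A"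
  using assms
proof (induction A rule: finite_ranking_induct[where f = h])
  case empty
  then show ?case by simp
next
  case (insert a S)
  show ?case
  proof (cases "a \<in> S")
    case True
    then show ?thesis using insert.IH by (simp add: insert_absorb)
  next
    case aS: False
    show ?thesis
    proof (intro allI impI)
      fix k assume k: "k \<le> card (insert a S)"
      have cA: "card (insert a S) = card S + 1" using aS insert.hyps(1) by simp
      show "\<exists>W\<subseteq>insert a S. card W = k \<and> real (card (insert a S)) * sum h W \<le> real k * sum h (insert a S)"
      proof (cases "k = card (insert a S)")
        case True
        then show ?thesis by blast
      next
        case False
        then have "k \<le> card S" using k cA by simp
        then obtain W where W: "W \<subseteq> S" "card W = k" "real (card S) * sum h W \<le> real k * sum h S"
          using insert.IH by blast
        have fW: "finite W" using W(1) insert.hyps(1) finite_subset by blast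
        have "sum h W \<le> sum (\<lambda>_. h a) W" using W(1) insert.hyps(2) by (intro sum_mono) auto
        then have sW: "sum h W \<le> real k * h a" using W(2) by simp
        have "real (card (insert a S)) * sum h W = real (card S) * sum h W + sum h W" using cA by (simp add: algebra_simps)
        also have "\<dots> \<le> real k * sum h S + real k * h a" using W(3) sW by linarith
        also have "\<dots> = real k * sum h (insert a S)" using aS insert.hyps(1) by (simp add: algebra_simps)
        finally show ?thesis using W(1,2) by blast
      qed
    qed
  qed
qed

lemma exists_level:
  fixes x :: "'a::finite \<Rightarrow> real"
  assumes m: "1 \<le> m" "m \<le> CARD('a)"
  shows "\<exists>v. card {u. x u < v} < m \<and> m \<le> card {u. x u \<le> v}"
proof -
  define V where "V = x ` {u. m \<le> card {w. x w \<le> x u}}"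
  have fr: "finite (range x)" by simp
  have "Max (range x) \<in> range x" using fr by (intro Max_in) auto
  then obtain u0 where u0: "x u0 = Max (range x)" by (metis imageE)
  have u0max: "\<forall>w. x w \<le> x u0" using u0 Max_ge[OF fr] by auto
  have "{w. x w \<le> x u0} = UNIV" using u0max by auto
  then have "x u0 \<in> V" using m unfolding V_def by auto
  then have Vne: "V \<noteq> {}" by auto
  have fV: "finite V" unfolding V_def by simp
  define v where "v = Min V"
  have vV: "v \<in> V" using Min_in[OF fV Vne] v_def by simp
  have vmin: "\<forall>z\<in>V. v \<le> z" using Min_le[OF fV] v_def by simp
  have le: "m \<le> card {u. x u \<le> v}" using vV unfolding V_def by auto
  have lt: "card {u. x u < v} < m"
  proof (rule ccontr)
    assume "\<not> card {u. x u < v} < m"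
    then have cP: "m \<le> card {u. x u < v}" by simp
    define P where "P = {u. x u < v}"
    have "card P > 0" using cP m unfolding P_def by simp
    then have "P \<noteq> {}" by auto
    then have fP: "finite (x ` P)" "x ` P \<noteq> {}" by auto
    obtain w0 where w0: "w0 \<in> P" "x w0 = Max (x ` P)" using Max_in[OF fP] by auto
    have "{w. x w \<le> x w0} = P"
    proof
      show "{w. x w \<le> x w0} \<subseteq> P" using w0(1) unfolding P_def by auto
      show "P \<subseteq> {w. x w \<le> x w0}" using Max_ge[OF fP(1)] w0(2) by auto
    qed
    then have "x w0 \<in> V" using cP unfolding V_def P_def by auto
    then have "v \<le> x w0" using vmin by auto
    then show False using w0(1) unfolding P_def by simp
  qed
  show ?thesis using le lt by blast
qed

lemma lorenz_final:
  fixes x d :: "'a::finite \<Rightarrow> real"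
  assumes tight: "\<And>T. (\<forall>u w. u \<in> T \<longrightarrow> x w \<le> x u \<longrightarrow> w \<in> T) \<Longrightarrow> sum d T \<le> sum x T"
    and m: "1 \<le> m" "m \<le> CARD('a)"
  shows "lorenz_sum UNIV d m \<le> lorenz_sum UNIV x m"
proof -
  obtain v where v: "card {u. x u < v} < m" "m \<le> card {u. x u \<le> v}" using exists_level[OF m] by blast
  define L where "L = {u. x u < v}"
  define T where "T = {u. x u \<le> v}"
  define l where "l = card L"
  define M where "M = card T"
  have LT: "L \<subseteq> T" unfolding L_def T_def by auto
  have lm: "l < m" "m \<le> M" using v unfolding l_def M_def L_def T_def by auto
  have cTL: "card (T - L) = M - l" using LT unfolding M_def l_def by (simp add: card_Diff_subset)
  have mlc: "m - l \<le> card (T - L)" using cTL lm by simp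
  have "\<exists>W\<subseteq>T - L. card W = m - l \<and> real (card (T - L)) * sum d W \<le> real (m - l) * sum d (T - L)"
    using avg_subset[of "T - L" d] mlc by simp
  then obtain W where W: "W \<subseteq> T - L" "card W = m - l" "real (M - l) * sum d W \<le> real (m - l) * sum d (T - L)"
    using cTL by auto
  have WL: "W \<inter> L = {}" using W(1) by auto
  have "card (L \<union> W) = card L + card W" using WL by (simp add: card_Un_disjoint Int_commute)
  then have cS: "card (L \<union> W) = m" using W(2) lm unfolding l_def by simp
  have up: "lorenz_sum UNIV d m \<le> sum d L + sum d W"
  proof -
    have "sum d (L \<union> W) = sum d L + sum d W" using WL by (simp add: sum.union_disjoint Int_commute)
    then show ?thesis using lorenz_le[OF cS, of d] by simp
  qed
  obtain S where S: "card S = m" "lorenz_sum UNIV x m = sum x S" using lorenz_eq[OF m(2), of x] by blast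
  define j where "j = card (S \<inter> L)"
  have jl: "j \<le> l" unfolding j_def l_def by (intro card_mono) auto
  have sS: "sum x S = sum x (S \<inter> L) + sum x (S - L)" by (rule sum.Int_Diff) simp
  have sL: "sum x L = sum x (S \<inter> L) + sum x (L - S)" using sum.Int_Diff[of L x S] by (simp add: Int_commute)
  have cSL: "card (S - L) = m - j" using S(1) unfolding j_def by (simp add: card_Diff_subset_Int)
  have cLS: "card (L - S) = l - j" unfolding l_def j_def by (simp add: card_Diff_subset_Int Int_commute)
  have "sum (\<lambda>_. v) (S - L) \<le> sum x (S - L)" unfolding L_def by (intro sum_mono) auto
  then have a1: "real (m - j) * v \<le> sum x (S - L)" using cSL by simp
  have "sum x (L - S) \<le> sum (\<lambda>_. v) (L - S)" unfolding L_def by (intro sum_mono) auto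
  then have a2: "sum x (L - S) \<le> real (l - j) * v" using cLS by simp
  have "real (m - j) = real (m - l) + real (l - j)" using jl lm by simp
  then have low: "sum x L + real (m - l) * v \<le> lorenz_sum UNIV x m"
    using S(2) sS sL a1 a2 by (simp add: algebra_simps)
  have sT: "sum x T = sum x L + sum x (T - L)" using sum.subset_diff[OF LT, of x] sum.subset_diff[OF LT, of d] by simp
  have "sum x (T - L) = sum (\<lambda>_. v) (T - L)" unfolding T_def L_def by (intro sum.cong) auto
  then have sT2: "sum x T = sum x L + real (M - l) * v" using sT cTL by simp
  have dT: "sum d T = sum d L + sum d (T - L)" using sum.subset_diff[OF LT, of x] sum.subset_diff[OF LT, of d] by simp
  have tL: "sum d L \<le> sum x L" by (rule tight) (auto simp: L_def)
  have tT: "sum d T \<le> sum x T" by (rule tight) (auto simp: T_def)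
  define Dl where "Dl = real (M - l)"
  define E where "E = real (m - l)"
  define G where "G = real (M - m)"
  have DEG: "Dl = E + G" unfolding Dl_def E_def G_def using lm by simp
  have Dpos: "Dl > 0" unfolding Dl_def using lm by simp
  have E0: "E \<ge> 0" "G \<ge> 0" unfolding E_def G_def by auto
  have i1: "Dl * sum d W \<le> E * sum d (T - L)" using W(3) unfolding Dl_def E_def .
  have i2: "G * sum d L \<le> G * sum x L" using tL E0 by (simp add: mult_left_mono)
  have i3: "E * (sum d L + sum d (T - L)) \<le> E * (sum x L + Dl * v)"
    using tT dT sT2 E0 unfolding Dl_def by (simp add: mult_left_mono)
  have "Dl * (sum d L + sum d W) \<le> Dl * (sum x L + E * v)"
  proof -
    have "Dl * (sum d L + sum d W) = Dl * sum d L + Dl * sum d W" by (simp add: algebra_simps)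
    also have "\<dots> \<le> (E + G) * sum d L + E * sum d (T - L)" using i1 DEG by simp
    also have "\<dots> = G * sum d L + E * (sum d L + sum d (T - L))" by (simp add: algebra_simps)
    also have "\<dots> \<le> G * sum x L + E * (sum x L + Dl * v)" using i2 i3 by linarith
    also have "\<dots> = Dl * (sum x L + E * v)" using DEG by (simp add: algebra_simps)
    finally show ?thesis .
  qed
  then have "sum d L + sum d W \<le> sum x L + E * v" using Dpos by (simp add: mult_le_cancel_left_pos)
  then show ?thesis using up low unfolding E_def by linarith
qed



lemma cnt_card: "cnt L k y = card {x\<in>{1..y}. L x = k}"
  unfolding cnt_def by (simp add: sum.inter_filter[symmetric])

definition grp :: "nat \<Rightarrow> (nat \<Rightarrow> 'a set) \<Rightarrow> 'a \<Rightarrow> nat" where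
  "grp t C u = (SOME k. k \<in> {1..t} \<and> u \<in> C k)"

lemma grp_in:
  assumes "(\<Union>k\<in>{1..t}. C k) = UNIV"
  shows "grp t C u \<in> {1..t} \<and> u \<in> C (grp t C u)"
proof -
  have "\<exists>k. k \<in> {1..t} \<and> u \<in> C k" using assms by blast
  then show ?thesis unfolding grp_def by (rule someI_ex)
qed

lemma grp_unique:
  assumes "(\<Union>k\<in>{1..t}. C k) = UNIV" "\<forall>k\<in>{1..t}. \<forall>l\<in>{1..t}. k \<noteq> l \<longrightarrow> C k \<inter> C l = {}"
    and "k \<in> {1..t}" "u \<in> C k"
  shows "grp t C u = k"
  using grp_in[OF assms(1), of u] assms(2-4) by blast

definition lab :: "nat \<Rightarrow> (nat \<Rightarrow> 'a::finite set) \<Rightarrow> ('a \<Rightarrow> nat) \<Rightarrow> nat \<Rightarrow> nat" where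
  "lab t C s x = (if x \<in> {1..CARD('a)} then grp t C (inv_into UNIV s x) else 0)"

lemma rank_range:
  fixes s :: "'a::finite \<Rightarrow> nat"
  shows "s \<in> rankings \<Longrightarrow> s u \<in> {1..CARD('a)}"
  unfolding rankings_def bij_betw_def by auto

lemma lab_rank: "s \<in> rankings \<Longrightarrow> lab t C s (s u) = grp t C u"
  unfolding lab_def using rank_range[of s u] unfolding rankings_def bij_betw_def by auto

lemma cnt_rank:
  fixes phi :: "'a::finite \<Rightarrow> nat"
  assumes cover: "(\<Union>k\<in>{1..t}. C k) = UNIV"
    and disj: "\<forall>k\<in>{1..t}. \<forall>l\<in>{1..t}. k \<noteq> l \<longrightarrow> C k \<inter> C l = {}"
    and bij: "bij_betw phi UNIV {1..CARD('a)}" and lb: "\<forall>u. Lb (phi u) = grp t C u"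
    and k: "k \<in> {1..t}" and y: "y \<le> CARD('a)"
  shows "cnt Lb k y = card {u \<in> C k. phi u \<le> y}"
proof -
  have img: "phi ` {u \<in> C k. phi u \<le> y} = {x\<in>{1..y}. Lb x = k}"
  proof
    show "phi ` {u \<in> C k. phi u \<le> y} \<subseteq> {x\<in>{1..y}. Lb x = k}"
    proof
      fix x assume "x \<in> phi ` {u \<in> C k. phi u \<le> y}"
      then obtain u where u: "u \<in> C k" "phi u \<le> y" "x = phi u" by auto
      have "phi u \<ge> 1" using bij unfolding bij_betw_def by auto
      moreover have "Lb x = k" using u lb grp_unique[OF cover disj k u(1)] by simp
      ultimately show "x \<in> {x\<in>{1..y}. Lb x = k}" using u by auto
    qed
    show "{x\<in>{1..y}. Lb x = k} \<subseteq> phi ` {u \<in> C k. phi u \<le> y}"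
    proof
      fix x assume x: "x \<in> {x\<in>{1..y}. Lb x = k}"
      then have "x \<in> {1..CARD('a)}" using y by auto
      then have "x \<in> phi ` UNIV" using bij unfolding bij_betw_def by auto
      then obtain u where u: "x = phi u" by auto
      have "grp t C u = k" using x u lb by auto
      then have "u \<in> C k" using grp_in[OF cover, of u] by simp
      then show "x \<in> phi ` {u \<in> C k. phi u \<le> y}" using u x by auto
    qed
  qed
  have "inj_on phi {u \<in> C k. phi u \<le> y}" using bij unfolding bij_betw_def by (auto intro: inj_on_subset)
  then have "card {u \<in> C k. phi u \<le> y} = card {x\<in>{1..y}. Lb x = k}" using img card_image by fastforce
  then show ?thesis by (simp add: cnt_card)
qed

lemma feasL_lab:
  fixes s :: "'a::finite \<Rightarrow> nat"
  assumes cover: "(\<Union>k\<in>{1..t}. C k) = UNIV"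
    and disj: "\<forall>k\<in>{1..t}. \<forall>l\<in>{1..t}. k \<noteq> l \<longrightarrow> C k \<inter> C l = {}"
    and s: "s \<in> feasible_rankings t C ub"
  shows "feasL CARD('a) t ub (\<lambda>k. card (C k)) (lab t C s)"
proof -
  have sr: "s \<in> rankings" using s unfolding feasible_rankings_def by auto
  have bij: "bij_betw s UNIV {1..CARD('a)}" using sr unfolding rankings_def by auto
  have lb: "\<forall>u. lab t C s (s u) = grp t C u" using lab_rank[OF sr] by auto
  show ?thesis unfolding feasL_def
  proof (intro conjI ballI)
    fix x assume x: "x \<in> {1..CARD('a)}"
    then have "x \<in> s ` UNIV" using bij unfolding bij_betw_def by auto
    then obtain u where "x = s u" by auto
    then show "lab t C s x \<in> {1..t}" using lb grp_in[OF cover] by auto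
  next
    fix y k assume y: "y \<in> {1..CARD('a)}" and k: "k \<in> {1..t}"
    have "cnt (lab t C s) k y = card {u \<in> C k. s u \<le> y}" using cnt_rank[OF cover disj bij lb k] y by auto
    then show "int (cnt (lab t C s) k y) \<le> ub y k" using s y k unfolding feasible_rankings_def by auto
  next
    fix k assume k: "k \<in> {1..t}"
    have "cnt (lab t C s) k CARD('a) = card {u \<in> C k. s u \<le> CARD('a)}" using cnt_rank[OF cover disj bij lb k] by auto
    also have "{u \<in> C k. s u \<le> CARD('a)} = C k" using rank_range[OF sr] by auto
    finally show "cnt (lab t C s) k CARD('a) = card (C k)" .
  qed
qed

lemma telescope_f:
  fixes f :: "nat \<Rightarrow> real"
  assumes p: "p \<in> {1..N}"
  shows "f p = f N + (\<Sum>i=1..N-1. if p \<le> i then f i - f (Suc i) else 0)"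
proof -
  have "(\<Sum>i=1..N-1. if p \<le> i then f i - f (Suc i) else 0) = (\<Sum>i\<in>{i\<in>{1..N-1}. p \<le> i}. f i - f (Suc i))"
    by (rule sum.inter_filter[symmetric]) simp
  also have "{i\<in>{1..N-1}. p \<le> i} = {p..N-1}" using p by auto
  also have "(\<Sum>i=p..N-1. f i - f (Suc i)) = - (\<Sum>i=p..N-1. f (Suc i) - f i)"
    by (simp add: sum_negf[symmetric])
  also have "(\<Sum>i=p..N-1. f (Suc i) - f i) = f (Suc (N-1)) - f p" using p by (intro sum_Suc_diff) auto
  also have "Suc (N - 1) = N" using p by auto
  finally show ?thesis by simp
qed

lemma abel:
  fixes f :: "nat \<Rightarrow> real" and r :: "'a \<Rightarrow> nat"
  assumes "finite T" "\<forall>u. r u \<in> {1..N}"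
  shows "(\<Sum>u\<in>T. f (r u)) = real (card T) * f N + (\<Sum>i=1..N-1. (f i - f (Suc i)) * real (card {u\<in>T. r u \<le> i}))"
proof -
  have "(\<Sum>u\<in>T. f (r u)) = (\<Sum>u\<in>T. f N + (\<Sum>i=1..N-1. if r u \<le> i then f i - f (Suc i) else 0))"
    using assms(2) by (intro sum.cong refl telescope_f) auto
  also have "\<dots> = real (card T) * f N + (\<Sum>u\<in>T. \<Sum>i=1..N-1. if r u \<le> i then f i - f (Suc i) else 0)"
    by (simp add: sum.distrib)
  also have "(\<Sum>u\<in>T. \<Sum>i=1..N-1. if r u \<le> i then f i - f (Suc i) else 0)
      = (\<Sum>i=1..N-1. \<Sum>u\<in>T. if r u \<le> i then f i - f (Suc i) else 0)" by (rule sum.swap)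
  also have "\<dots> = (\<Sum>i=1..N-1. (f i - f (Suc i)) * real (card {u\<in>T. r u \<le> i}))"
  proof (rule sum.cong[OF refl])
    fix i
    have "(\<Sum>u\<in>T. if r u \<le> i then f i - f (Suc i) else 0) = (\<Sum>u\<in>{u\<in>T. r u \<le> i}. f i - f (Suc i))"
      by (rule sum.inter_filter[symmetric]) (rule assms(1))
    then show "(\<Sum>u\<in>T. if r u \<le> i then f i - f (Suc i) else 0) = (f i - f (Suc i)) * real (card {u\<in>T. r u \<le> i})"
      by simp
  qed
  finally show ?thesis .
qed

lemma card_groups:
  fixes s :: "'a::finite \<Rightarrow> nat" and t :: nat and C :: "nat \<Rightarrow> 'a set"
  assumes cover: "(\<Union>k\<in>{1..t}. C k) = UNIV"
    and disj: "\<forall>k\<in>{1..t}. \<forall>l\<in>{1..t}. k \<noteq> l \<longrightarrow> C k \<inter> C l = {}"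
  shows "card {u\<in>T. s u \<le> i} = (\<Sum>k=1..t. card {u\<in>T \<inter> C k. s u \<le> i})"
proof -
  have "{u\<in>T. s u \<le> i} = (\<Union>k\<in>{1..t}. {u\<in>T \<inter> C k. s u \<le> i})" using cover by auto
  moreover have "card (\<Union>k\<in>{1..t}. {u\<in>T \<inter> C k. s u \<le> i}) = (\<Sum>k=1..t. card {u\<in>T \<inter> C k. s u \<le> i})"
    using disj by (intro card_UN_disjoint) auto
  ultimately show ?thesis by simp
qed

lemma pareto:
  fixes s r :: "'a::finite \<Rightarrow> nat" and t :: nat and C :: "nat \<Rightarrow> 'a set" and f :: "nat \<Rightarrow> real"
    and T :: "'a set" and ub :: "nat \<Rightarrow> nat \<Rightarrow> int"
  assumes cover: "(\<Union>k\<in>{1..t}. C k) = UNIV"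
    and disj: "\<forall>k\<in>{1..t}. \<forall>l\<in>{1..t}. k \<noteq> l \<longrightarrow> C k \<inter> C l = {}"
    and f_mono: "\<forall>i j. 1 \<le> i \<and> i \<le> j \<and> j \<le> CARD('a) \<longrightarrow> f j \<le> f i"
    and s: "s \<in> feasible_rankings t C ub" and r: "r \<in> feasible_rankings t C ub"
    and lt: "(\<Sum>u\<in>T. f (s u)) < (\<Sum>u\<in>T. f (r u))"
  shows "\<exists>s'\<in>feasible_rankings t C ub. (\<forall>u\<in>T. f (s u) \<le> f (s' u)) \<and> (\<exists>u\<in>T. f (s u) < f (s' u))"
proof -
  define n where "n = CARD('a)"
  have sr: "s \<in> rankings" "r \<in> rankings" using s r unfolding feasible_rankings_def by auto
  have srng: "\<forall>u. s u \<in> {1..n}" "\<forall>u. r u \<in> {1..n}" using rank_range[OF sr(1)] rank_range[OF sr(2)] n_def by auto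
  have fT: "finite T" by simp
  have "\<exists>i\<in>{1..n-1}. f (Suc i) < f i \<and> card {u\<in>T. s u \<le> i} < card {u\<in>T. r u \<le> i}"
  proof (rule ccontr)
    assume H: "\<not> ?thesis"
    have "(\<Sum>i=1..n-1. (f i - f (Suc i)) * real (card {u\<in>T. r u \<le> i}))
        \<le> (\<Sum>i=1..n-1. (f i - f (Suc i)) * real (card {u\<in>T. s u \<le> i}))"
    proof (rule sum_mono)
      fix i assume i: "i \<in> {1..n-1}"
      have "1 \<le> i \<and> i \<le> Suc i \<and> Suc i \<le> CARD('a)" using i n_def by auto
      then have c0: "f (Suc i) \<le> f i" using f_mono by blast
      show "(f i - f (Suc i)) * real (card {u\<in>T. r u \<le> i}) \<le> (f i - f (Suc i)) * real (card {u\<in>T. s u \<le> i})"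
      proof (cases "f (Suc i) < f i")
        case True
        then have "card {u\<in>T. r u \<le> i} \<le> card {u\<in>T. s u \<le> i}" using H i by auto
        then show ?thesis using c0 by (intro mult_left_mono) auto
      next
        case False
        then show ?thesis using c0 by simp
      qed
    qed
    then have "(\<Sum>u\<in>T. f (r u)) \<le> (\<Sum>u\<in>T. f (s u))"
      using abel[OF fT srng(1), of f] abel[OF fT srng(2), of f] by simp
    then show False using lt by simp
  qed
  then obtain i where i: "i \<in> {1..n-1}" "f (Suc i) < f i" "card {u\<in>T. s u \<le> i} < card {u\<in>T. r u \<le> i}"
    by blast
  have ileq: "i \<le> n" using i by auto
  define tau where "tau k = card (T \<inter> C k)" for k
  define cap where "cap k = card (C k)" for k
  define Ls where "Ls = lab t C s"
  define Lr where "Lr = lab t C r"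
  have fLs: "feasL n t ub cap Ls" using feasL_lab[OF cover disj s] unfolding Ls_def cap_def n_def .
  have fLr: "feasL n t ub cap Lr" using feasL_lab[OF cover disj r] unfolding Lr_def cap_def n_def .
  have tau_le: "\<forall>k\<in>{1..t}. tau k \<le> cap k" unfolding tau_def cap_def by (auto intro: card_mono)
  have bijs: "bij_betw s UNIV {1..CARD('a)}" "bij_betw r UNIV {1..CARD('a)}" using sr unfolding rankings_def by auto
  have lbs: "\<forall>u. Ls (s u) = grp t C u" using lab_rank[OF sr(1)] unfolding Ls_def by auto
  have lbr: "\<forall>u. Lr (r u) = grp t C u" using lab_rank[OF sr(2)] unfolding Lr_def by auto
  have cs_eq: "cnt Ls k y = card {u \<in> C k. s u \<le> y}" if "k \<in> {1..t}" "y \<le> n" for k y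
    using cnt_rank[OF cover disj bijs(1) lbs that(1)] that(2) n_def by auto
  have cr_eq: "cnt Lr k y = card {u \<in> C k. r u \<le> y}" if "k \<in> {1..t}" "y \<le> n" for k y
    using cnt_rank[OF cover disj bijs(2) lbr that(1)] that(2) n_def by auto
  have cr: "card {u\<in>T. r u \<le> i} \<le> cT t tau Lr i"
  proof -
    have "card {u\<in>T. r u \<le> i} = (\<Sum>k=1..t. card {u\<in>T \<inter> C k. r u \<le> i})" by (rule card_groups[OF cover disj])
    also have "\<dots> \<le> (\<Sum>k=1..t. min (cnt Lr k i) (tau k))"
    proof (rule sum_mono)
      fix k assume k: "k \<in> {1..t}"
      have "card {u\<in>T \<inter> C k. r u \<le> i} \<le> card {u \<in> C k. r u \<le> i}" by (intro card_mono) auto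
      moreover have "card {u\<in>T \<inter> C k. r u \<le> i} \<le> tau k" unfolding tau_def by (intro card_mono) auto
      ultimately show "card {u\<in>T \<inter> C k. r u \<le> i} \<le> min (cnt Lr k i) (tau k)" using cr_eq[OF k ileq] by simp
    qed
    finally show ?thesis unfolding cT_def .
  qed
  obtain L' where L': "feasL n t ub cap L'" "domL t tau L' Ls" "cT t tau Lr i \<le> cT t tau L' i"
    using improve[OF fLr tau_le ileq fLs] by blast
  have "(\<Sum>k=1..t. card {u\<in>T \<inter> C k. s u \<le> i}) < (\<Sum>k=1..t. min (cnt L' k i) (tau k))"
    using card_groups[OF cover disj, of T s i] i(3) cr L'(3) unfolding cT_def by linarith
  then obtain k where k: "k \<in> {1..t}" and kl: "card {u\<in>T \<inter> C k. s u \<le> i} < min (cnt L' k i) (tau k)"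
    by (meson not_less sum_mono)
  define Qb where "Qb = {u\<in>T \<inter> C k. i < s u}"
  have Qbne: "Qb \<noteq> {}"
  proof
    assume "Qb = {}"
    then have "{u\<in>T \<inter> C k. s u \<le> i} = T \<inter> C k" unfolding Qb_def by auto
    then show False using kl unfolding tau_def by simp
  qed
  have fQ: "finite (s ` Qb)" "s ` Qb \<noteq> {}" using Qbne by auto
  have "Min (s ` Qb) \<in> s ` Qb" using Min_in[OF fQ] .
  then obtain us where us: "us \<in> Qb" "s us = Min (s ` Qb)" by auto
  have usmin: "\<forall>u\<in>Qb. s us \<le> s u" using us(2) Min_le[OF fQ(1)] by auto
  have usT: "us \<in> T" "us \<in> C k" "i < s us" using us(1) unfolding Qb_def by auto
  have grpus: "grp t C us = k" using grp_unique[OF cover disj k usT(2)] .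
  define w where "w u = (if u = us then i else if u \<in> T then s u else n)" for u
  have cond: "card {a\<in>UNIV. grp t C a = k' \<and> w a \<le> y} \<le> card {b\<in>{1..n}. L' b = k' \<and> b \<le> y}" for k' y
  proof (cases "k' \<in> {1..t}")
    case False
    have e: "{a\<in>UNIV. grp t C a = k' \<and> w a \<le> y} = {}" using False grp_in[OF cover] by auto
    show ?thesis unfolding e by simp
  next
    case k': True
    show ?thesis
    proof (cases "n \<le> y")
      case True
      have "{a\<in>UNIV. grp t C a = k' \<and> w a \<le> y} \<subseteq> C k'" using grp_in[OF cover] by auto
      then have "card {a\<in>UNIV. grp t C a = k' \<and> w a \<le> y} \<le> card (C k')" by (intro card_mono) auto
      moreover have "{b\<in>{1..n}. L' b = k' \<and> b \<le> y} = {x\<in>{1..n}. L' x = k'}" using True by auto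
      moreover have "card {x\<in>{1..n}. L' x = k'} = card (C k')"
        using L'(1) k' unfolding feasL_def cap_def by (auto simp: cnt_card)
      ultimately show ?thesis by simp
    next
      case False
      then have yn: "y < n" by simp
      have rhs: "card {b\<in>{1..n}. L' b = k' \<and> b \<le> y} = cnt L' k' y"
      proof -
        have "{b\<in>{1..n}. L' b = k' \<and> b \<le> y} = {x\<in>{1..y}. L' x = k'}" using yn by auto
        then show ?thesis by (simp add: cnt_card)
      qed
      have inT: "a \<in> T \<and> a \<in> C k'" if "grp t C a = k'" "w a \<le> y" for a
      proof -
        have "a \<in> T" using that yn usT(1) unfolding w_def by (auto split: if_splits)
        moreover have "a \<in> C k'" using that grp_in[OF cover, of a] by simp
        ultimately show ?thesis by simp
      qed
      show ?thesis
      proof (cases "k' = k \<and> i \<le> y \<and> y < s us")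
        case True
        have sub: "{a\<in>UNIV. grp t C a = k' \<and> w a \<le> y} \<subseteq> insert us {u\<in>T \<inter> C k. s u \<le> i}"
        proof
          fix a assume a: "a \<in> {a\<in>UNIV. grp t C a = k' \<and> w a \<le> y}"
          then have aT: "a \<in> T" "a \<in> C k" using inT True by auto
          show "a \<in> insert us {u\<in>T \<inter> C k. s u \<le> i}"
          proof (cases "a = us")
            case True then show ?thesis by simp
          next
            case False
            then have "s a \<le> y" using a aT unfolding w_def by auto
            have "s a \<le> i"
            proof (rule ccontr)
              assume "\<not> s a \<le> i"
              then have "a \<in> Qb" using aT unfolding Qb_def by auto
              then have "s us \<le> s a" using usmin by auto
              then show False using \<open>s a \<le> y\<close> True by simp
            qed
            then show ?thesis using aT by auto
          qed
        qed
        have "card {a\<in>UNIV. grp t C a = k' \<and> w a \<le> y} \<le> card (insert us {u\<in>T \<inter> C k. s u \<le> i})"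
          by (intro card_mono[OF _ sub]) auto
        also have "\<dots> \<le> card {u\<in>T \<inter> C k. s u \<le> i} + 1" by (simp add: card_insert_le_m1)
        also have "\<dots> \<le> cnt L' k i" using kl by simp
        also have "\<dots> \<le> cnt L' k y" using True by (intro cnt_mono) simp
        finally show ?thesis using rhs True by simp
      next
        case False
        have sub: "{a\<in>UNIV. grp t C a = k' \<and> w a \<le> y} \<subseteq> {u\<in>T \<inter> C k'. s u \<le> y}"
        proof
          fix a assume a: "a \<in> {a\<in>UNIV. grp t C a = k' \<and> w a \<le> y}"
          then have aT: "a \<in> T" "a \<in> C k'" using inT by auto
          show "a \<in> {u\<in>T \<inter> C k'. s u \<le> y}"
          proof (cases "a = us")
            case True
            then have "k' = k" using a grpus by simp
            moreover have "i \<le> y" using a True unfolding w_def by simp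
            ultimately have "s us \<le> y" using False by simp
            then show ?thesis using True aT by simp
          next
            case False
            then have "s a \<le> y" using a aT unfolding w_def by auto
            then show ?thesis using aT by simp
          qed
        qed
        have "card {a\<in>UNIV. grp t C a = k' \<and> w a \<le> y} \<le> card {u\<in>T \<inter> C k'. s u \<le> y}"
          by (intro card_mono[OF _ sub]) auto
        also have "\<dots> \<le> min (cnt Ls k' y) (tau k')"
        proof -
          have "card {u\<in>T \<inter> C k'. s u \<le> y} \<le> card {u \<in> C k'. s u \<le> y}" by (intro card_mono) auto
          moreover have "card {u\<in>T \<inter> C k'. s u \<le> y} \<le> tau k'" unfolding tau_def by (intro card_mono) auto
          ultimately show ?thesis using cs_eq[OF k'] yn by simp
        qed
        also have "\<dots> \<le> min (cnt L' k' y) (tau k')" using L'(2) k' unfolding domL_def by auto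
        also have "\<dots> \<le> cnt L' k' y" by simp
        finally show ?thesis using rhs by simp
      qed
    qed
  qed
  obtain phi where phi: "inj_on phi UNIV" "phi ` UNIV \<subseteq> {1..n}" "\<forall>a\<in>UNIV. L' (phi a) = grp t C a \<and> phi a \<le> w a"
    using assign_aux[of UNIV "grp t C" w L', rule_format, of "{1..n}"] cond by auto
  have "card (phi ` UNIV) = n" using phi(1) card_image n_def by fastforce
  then have "phi ` UNIV = {1..n}" using phi(2) by (intro card_subset_eq) auto
  then have bphi: "bij_betw phi UNIV {1..CARD('a)}" using phi(1) n_def unfolding bij_betw_def by simp
  have lphi: "\<forall>u. L' (phi u) = grp t C u" using phi(3) by auto
  have phir: "phi \<in> rankings" using bphi unfolding rankings_def by simp
  have phif: "phi \<in> feasible_rankings t C ub"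
    unfolding feasible_rankings_def
  proof (intro CollectI conjI phir ballI)
    fix i' k' assume i': "i' \<in> {1..CARD('a)}" and k': "k' \<in> {1..t}"
    have "card {u \<in> C k'. phi u \<le> i'} = cnt L' k' i'" using cnt_rank[OF cover disj bphi lphi k'] i' by auto
    then show "int (card {u \<in> C k'. phi u \<le> i'}) \<le> ub i' k'" using L'(1) i' k' n_def unfolding feasL_def by auto
  qed
  have prng: "\<forall>u. phi u \<in> {1..n}" using phi(2) by (auto simp: image_subset_iff)
  have le: "phi u \<le> s u" if "u \<in> T" for u
  proof -
    have "phi u \<le> w u" using phi(3) by blast
    then show ?thesis using that usT(3) unfolding w_def by (cases "u = us") auto
  qed
  have weak: "\<forall>u\<in>T. f (s u) \<le> f (phi u)"
  proof
    fix u assume "u \<in> T"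
    then have "1 \<le> phi u \<and> phi u \<le> s u \<and> s u \<le> CARD('a)" using le[of u] prng srng(1) n_def by auto
    then show "f (s u) \<le> f (phi u)" using f_mono by blast
  qed
  have "phi us \<le> w us" using phi(3) by blast
  then have "phi us \<le> i" unfolding w_def by simp
  then have "1 \<le> phi us \<and> phi us \<le> i \<and> i \<le> CARD('a)" using prng ileq n_def by auto
  then have "f i \<le> f (phi us)" using f_mono by blast
  moreover have "1 \<le> Suc i \<and> Suc i \<le> s us \<and> s us \<le> CARD('a)" using usT(3) srng(1) n_def by auto
  then have "f (s us) \<le> f (Suc i)" using f_mono by blast
  ultimately have "f (s us) < f (phi us)" using i(2) by simp
  then show ?thesis using phif weak usT(1) by blast
qed



lemma fin_feas: "finite (feasible_rankings t C ub :: ('a::finite \<Rightarrow> nat) set)"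
proof -
  have "rankings \<subseteq> (PiE UNIV (\<lambda>_. {1..CARD('a)}) :: ('a \<Rightarrow> nat) set)"
  proof
    fix r :: "'a \<Rightarrow> nat" assume "r \<in> rankings"
    then show "r \<in> PiE UNIV (\<lambda>_. {1..CARD('a)})" using rank_range[of r] by (auto simp: PiE_def extensional_def)
  qed
  moreover have "finite (PiE UNIV (\<lambda>_. {1..CARD('a)}) :: ('a \<Rightarrow> nat) set)" by (intro finite_PiE) auto
  ultimately have "finite (rankings :: ('a \<Rightarrow> nat) set)" by (rule finite_subset)
  then show ?thesis unfolding feasible_rankings_def by simp
qed

lemma dv_sum:
  assumes "finite A" "set_pmf D \<subseteq> A"
  shows "dist_val V D u = (\<Sum>q\<in>A. V q u * pmf D q)"
  unfolding dist_val_def using assms by (intro integral_measure_pmf_real) auto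

lemma opt:
  fixes t :: nat and C :: "nat \<Rightarrow> 'a::finite set" and f :: "nat \<Rightarrow> real" and g :: "'a \<Rightarrow> real"
    and ub :: "nat \<Rightarrow> nat \<Rightarrow> int" and F :: "('a \<Rightarrow> nat) pmf" and T :: "'a set"
  assumes cover: "(\<Union>k\<in>{1..t}. C k) = UNIV"
    and disj: "\<forall>k\<in>{1..t}. \<forall>l\<in>{1..t}. k \<noteq> l \<longrightarrow> C k \<inter> C l = {}"
    and f_mono: "\<forall>i j. 1 \<le> i \<and> i \<le> j \<and> j \<le> CARD('a) \<longrightarrow> f j \<le> f i"
    and F_fair: "maxmin_fair (feasible_rankings t C ub) UNIV (\<lambda>r u. f (r u) - g u) F"
    and sF: "s \<in> set_pmf F"
    and Tdown: "\<forall>u w. u \<in> T \<longrightarrow> dist_val (\<lambda>r u. f (r u) - g u) F w \<le> dist_val (\<lambda>r u. f (r u) - g u) F u \<longrightarrow> w \<in> T"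
    and r: "r \<in> feasible_rankings t C ub"
  shows "(\<Sum>u\<in>T. f (r u)) \<le> (\<Sum>u\<in>T. f (s u))"
proof (rule ccontr)
  assume "\<not> ?thesis"
  then have lt: "(\<Sum>u\<in>T. f (s u)) < (\<Sum>u\<in>T. f (r u))" by simp
  define SS where "SS = feasible_rankings t C ub"
  define V where "V = (\<lambda>(r::'a \<Rightarrow> nat) u. f (r u) - g u)"
  have FS: "set_pmf F \<subseteq> SS" using F_fair unfolding maxmin_fair_def SS_def by auto
  have s: "s \<in> SS" using sF FS by auto
  have fSS: "finite SS" unfolding SS_def by (rule fin_feas)
  obtain s' where s': "s' \<in> SS" "\<forall>u\<in>T. f (s u) \<le> f (s' u)" "\<exists>u\<in>T. f (s u) < f (s' u)"
    using pareto[OF cover disj f_mono _ r lt] s unfolding SS_def by blast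
  define psi where "psi q = (if q = s then s' else q)" for q
  define D where "D = map_pmf psi F"
  have DS: "set_pmf D \<subseteq> SS" using FS s' unfolding D_def psi_def by auto
  have key: "dist_val V D u = dist_val V F u + pmf F s * (V s' u - V s u)" for u
  proof -
    have "dist_val V D u = measure_pmf.expectation F (\<lambda>q. V (psi q) u)"
      unfolding dist_val_def D_def by (simp add: integral_map_pmf)
    also have "\<dots> = (\<Sum>q\<in>SS. V (psi q) u * pmf F q)" using fSS FS by (intro integral_measure_pmf_real) auto
    finally have e1: "dist_val V D u = (\<Sum>q\<in>SS. V (psi q) u * pmf F q)" .
    have e2: "dist_val V F u = (\<Sum>q\<in>SS. V q u * pmf F q)" using dv_sum[OF fSS FS] .
    have "(\<Sum>q\<in>SS. V (psi q) u * pmf F q) - (\<Sum>q\<in>SS. V q u * pmf F q) = (\<Sum>q\<in>SS. (V (psi q) u - V q u) * pmf F q)"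
      by (simp add: sum_subtractf left_diff_distrib)
    also have "\<dots> = (V (psi s) u - V s u) * pmf F s + (\<Sum>q\<in>SS-{s}. (V (psi q) u - V q u) * pmf F q)"
      using fSS s by (simp add: sum.remove)
    also have "(\<Sum>q\<in>SS-{s}. (V (psi q) u - V q u) * pmf F q) = 0"
      by (intro sum.neutral) (auto simp: psi_def)
    finally show ?thesis using e1 e2 by (simp add: psi_def algebra_simps)
  qed
  obtain us where us: "us \<in> T" "f (s us) < f (s' us)" using s'(3) by blast
  have pos: "pmf F s > 0" using sF by (simp add: pmf_positive)
  have "V s us < V s' us" using us unfolding V_def by simp
  then have "dist_val V D us > dist_val V F us" using key[of us] pos by simp
  then obtain v where v: "dist_val V D v < dist_val V F v" "dist_val V F v \<le> dist_val V F us"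
    using F_fair DS unfolding maxmin_fair_def SS_def V_def by blast
  have "pmf F s * (V s' v - V s v) < 0" using v(1) key[of v] by simp
  then have "V s' v < V s v" using pos by (simp add: mult_less_0_iff)
  then have "f (s' v) < f (s v)" unfolding V_def by simp
  moreover have "v \<in> T" using Tdown us(1) v(2) unfolding V_def by blast
  ultimately show False using s'(2) by fastforce
qed

lemma tight:
  fixes t :: nat and C :: "nat \<Rightarrow> 'a::finite set" and f :: "nat \<Rightarrow> real" and g :: "'a \<Rightarrow> real"
    and ub :: "nat \<Rightarrow> nat \<Rightarrow> int" and F :: "('a \<Rightarrow> nat) pmf" and T :: "'a set"
  assumes cover: "(\<Union>k\<in>{1..t}. C k) = UNIV"
    and disj: "\<forall>k\<in>{1..t}. \<forall>l\<in>{1..t}. k \<noteq> l \<longrightarrow> C k \<inter> C l = {}"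
    and f_mono: "\<forall>i j. 1 \<le> i \<and> i \<le> j \<and> j \<le> CARD('a) \<longrightarrow> f j \<le> f i"
    and F_fair: "maxmin_fair (feasible_rankings t C ub) UNIV (\<lambda>r u. f (r u) - g u) F"
    and Tdown: "\<forall>u w. u \<in> T \<longrightarrow> dist_val (\<lambda>r u. f (r u) - g u) F w \<le> dist_val (\<lambda>r u. f (r u) - g u) F u \<longrightarrow> w \<in> T"
    and DS: "set_pmf D \<subseteq> feasible_rankings t C ub"
  shows "(\<Sum>u\<in>T. dist_val (\<lambda>r u. f (r u) - g u) D u) \<le> (\<Sum>u\<in>T. dist_val (\<lambda>r u. f (r u) - g u) F u)"
proof -
  define SS where "SS = feasible_rankings t C ub"
  define V where "V = (\<lambda>(r::'a \<Rightarrow> nat) u. f (r u) - g u)"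
  define Psi where "Psi q = (\<Sum>u\<in>T. V q u)" for q
  have FS: "set_pmf F \<subseteq> SS" using F_fair unfolding maxmin_fair_def SS_def by auto
  have DS': "set_pmf D \<subseteq> SS" using DS unfolding SS_def .
  have fSS: "finite SS" unfolding SS_def by (rule fin_feas)
  have Psi_le: "Psi q \<le> Psi s" if "q \<in> SS" "s \<in> set_pmf F" for q s
  proof -
    have "(\<Sum>u\<in>T. f (q u)) \<le> (\<Sum>u\<in>T. f (s u))"
      using opt[OF cover disj f_mono F_fair that(2) Tdown] that(1) unfolding SS_def by blast
    then show ?thesis unfolding Psi_def V_def by (simp add: sum_subtractf)
  qed
  have ex: "\<And>M. set_pmf M \<subseteq> SS \<Longrightarrow> (\<Sum>u\<in>T. dist_val V M u) = (\<Sum>q\<in>SS. Psi q * pmf M q)"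
  proof -
    fix M :: "('a \<Rightarrow> nat) pmf" assume M: "set_pmf M \<subseteq> SS"
    have "(\<Sum>u\<in>T. dist_val V M u) = (\<Sum>u\<in>T. \<Sum>q\<in>SS. V q u * pmf M q)" by (intro sum.cong refl dv_sum[OF fSS M])
    also have "\<dots> = (\<Sum>q\<in>SS. \<Sum>u\<in>T. V q u * pmf M q)" by (rule sum.swap)
    also have "\<dots> = (\<Sum>q\<in>SS. Psi q * pmf M q)" unfolding Psi_def by (simp add: sum_distrib_right)
    finally show "(\<Sum>u\<in>T. dist_val V M u) = (\<Sum>q\<in>SS. Psi q * pmf M q)" .
  qed
  obtain s0 where s0: "s0 \<in> set_pmf F" using set_pmf_not_empty by fast
  have "(\<Sum>q\<in>SS. Psi q * pmf D q) \<le> (\<Sum>q\<in>SS. Psi s0 * pmf D q)"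
  proof (rule sum_mono)
    fix q assume q: "q \<in> SS"
    show "Psi q * pmf D q \<le> Psi s0 * pmf D q"
    proof (cases "q \<in> set_pmf D")
      case True
      then show ?thesis using Psi_le[OF q s0] by (intro mult_right_mono) auto
    next
      case False
      then show ?thesis by (simp add: set_pmf_eq)
    qed
  qed
  also have "\<dots> = Psi s0" using sum_pmf_eq_1[OF fSS DS'] by (simp add: sum_distrib_left[symmetric])
  also have "\<dots> = (\<Sum>q\<in>SS. Psi s0 * pmf F q)" using sum_pmf_eq_1[OF fSS FS] by (simp add: sum_distrib_left[symmetric])
  also have "\<dots> \<le> (\<Sum>q\<in>SS. Psi q * pmf F q)"
  proof (rule sum_mono)
    fix q assume q: "q \<in> SS"
    show "Psi s0 * pmf F q \<le> Psi q * pmf F q"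
    proof (cases "q \<in> set_pmf F")
      case True
      have "s0 \<in> SS" using s0 FS by auto
      then show ?thesis using Psi_le[OF _ True] by (intro mult_right_mono) auto
    next
      case False
      then show ?thesis by (simp add: set_pmf_eq)
    qed
  qed
  finally show ?thesis using ex[OF DS'] ex[OF FS] unfolding V_def by simp
qed

theorem theorem2:
  fixes t :: nat
    and C :: "nat \<Rightarrow> 'a::finite set"
    and R :: "'a \<Rightarrow> real"
    and f :: "nat \<Rightarrow> real"
    and g :: "'a \<Rightarrow> real"
    and ub :: "nat \<Rightarrow> nat \<Rightarrow> int"
    and F :: "('a \<Rightarrow> nat) pmf"
  assumes groups_nonempty: "\<forall>k\<in>{1..t}. C k \<noteq> {}"
    and groups_disjoint: "\<forall>k\<in>{1..t}. \<forall>l\<in>{1..t}. k \<noteq> l \<longrightarrow> C k \<inter> C l = {}"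
    and groups_cover: "(\<Union>k\<in>{1..t}. C k) = UNIV"
    and R_inj: "inj R"
    and f_mono: "\<forall>i j. 1 \<le> i \<and> i \<le> j \<and> j \<le> CARD('a) \<longrightarrow> f j \<le> f i"
    and g_mono: "\<forall>u v. R u \<ge> R v \<longrightarrow> g u \<ge> g v"
    and S_nonempty: "feasible_rankings t C ub \<noteq> {}"
    and F_fair: "maxmin_fair (feasible_rankings t C ub) UNIV (\<lambda>r u. f (r u) - g u) F"
  shows "\<forall>D. set_pmf D \<subseteq> feasible_rankings t C ub \<longrightarrow>
           (\<forall>m\<in>{1..CARD('a)}.
              lorenz_sum UNIV (dist_val (\<lambda>r u. f (r u) - g u) D) m
              \<le> lorenz_sum UNIV (dist_val (\<lambda>r u. f (r u) - g u) F) m)"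
proof (intro allI impI ballI)
  fix D :: "('a \<Rightarrow> nat) pmf" and m :: nat
  assume DS: "set_pmf D \<subseteq> feasible_rankings t C ub" and m: "m \<in> {1..CARD('a)}"
  show "lorenz_sum UNIV (dist_val (\<lambda>r u. f (r u) - g u) D) m \<le> lorenz_sum UNIV (dist_val (\<lambda>r u. f (r u) - g u) F) m"
  proof (rule lorenz_final)
    fix T :: "'a set"
    assume "\<forall>u w. u \<in> T \<longrightarrow> dist_val (\<lambda>r u. f (r u) - g u) F w \<le> dist_val (\<lambda>r u. f (r u) - g u) F u \<longrightarrow> w \<in> T"
    then show "sum (dist_val (\<lambda>r u. f (r u) - g u) D) T \<le> sum (dist_val (\<lambda>r u. f (r u) - g u) F) T"
      using tight[OF groups_cover groups_disjoint f_mono F_fair _ DS] by blast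
  next
    show "1 \<le> m" "m \<le> CARD('a)" using m by auto
  qed
qed


end
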